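(* Let $m \geq 1$ and let $d$ be a positive integer with $\gcd(d, 2^m-1)=1$. For $a \in \mathrm{GF}(2^m)$ define $$W_d(a) = \sum_{x \in \mathrm{GF}(2^m)} (-1)^{\mathrm{Tr}(x^d + a x)},$$ where $\mathrm{Tr}\colon \mathrm{GF}(2^m)\to\mathrm{GF}(2)$ is the absolute trace. Suppose that $W_d(a)$ takes precisely three distinct values $A$, $B$, $C$ for $a \in \mathrm{GF}(2^m)^*$. If $A$, $B$, $C$ are all nonzero, then $2^{m+1}$ divides $AB$.
   Context: $W_d$ is the Walsh transform of the power map $x\mapsto x^d$ on $\mathrm{GF}(2^m)$. *)

theory Defs
  imports Main
begin

text \<open>GF(2^m) is rendered as an arbitrary finite field type 'a with CARD('a) = 2^m
  (unique up to isomorphism). The absolute trace GF(2^m) -> GF(2) is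
  Tr(x) = sum_{i<m} x^(2^i), whose values lie in the prime subfield {0,1}.\<close>

definition abs_trace :: "nat \<Rightarrow> 'a::field \<Rightarrow> 'a" where
  "abs_trace m x = (\<Sum>i<m. x ^ (2 ^ i))"

definition walsh_power :: "nat \<Rightarrow> nat \<Rightarrow> 'a::{field,finite} \<Rightarrow> int" where
  "walsh_power m d a = (\<Sum>x\<in>(UNIV::'a set).
      if abs_trace m (x ^ d + a * x) = 0 then 1 else -1)"

end

theory Submission
  imports Defs "HOL-Computational_Algebra.Polynomial" "HOL-Number_Theory.Residues"
begin


lemma char2_aux:
  assumes card: "card (UNIV :: 'a::{field,finite} set) = 2 ^ m" and m: "m \<ge> 1"
  shows "(1::'a) + 1 = 0"
proof -
  have pos: "CHAR('a) > 0" by (rule finite_imp_CHAR_pos) simp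
  have pr: "prime CHAR('a)" using pos prime_CHAR_semidom by blast
  have "CHAR('a) dvd 2 ^ m" using CHAR_dvd_CARD[where 'a='a] card by simp
  hence "CHAR('a) dvd 2" using pr prime_dvd_power by blast
  hence "CHAR('a) = 2" using pr
    by (simp add: primes_dvd_imp_eq)
  hence "of_nat 2 = (0::'a)" by (metis of_nat_CHAR)
  thus ?thesis by simp
qed

lemma power_card_same:
  fixes x :: "'a::{field,finite}"
  shows "x ^ card (UNIV :: 'a set) = x"
proof (cases "x = 0")
  case False
  have "x * (\<Prod>y\<in>UNIV-{0}. x * y) = x * x ^ (card (UNIV :: 'a set) - 1) * \<Prod>(UNIV-{0})"
    by (simp add: prod.distrib mult_ac)
  also have "x * x ^ (card (UNIV :: 'a set) - 1) = x ^ Suc (card (UNIV :: 'a set) - 1)"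
    by (subst power_Suc) auto
  also have "Suc (card (UNIV :: 'a set) - 1) = card (UNIV :: 'a set)"
    using finite_UNIV_card_ge_0[where ?'a = 'a] by simp
  also have "(\<Prod>y\<in>UNIV-{0}. x * y) = (\<Prod>y\<in>UNIV-{0}. y)"
    by (rule prod.reindex_bij_witness[of _ "\<lambda>y. y / x" "\<lambda>y. x * y"]) (use False in auto)
  finally show ?thesis
    by simp
qed (use finite_UNIV_card_ge_0[where ?'a = 'a] in auto)




lemma inv_even:
  assumes "finite S" "\<forall>p\<in>S. \<sigma> p \<in> S \<and> \<sigma> (\<sigma> p) = p \<and> \<sigma> p \<noteq> p"
  shows "even (card S)"
  using assms
proof (induction S rule: finite_psubset_induct)
  case (psubset S)
  show ?case
  proof (cases "S = {}")
    case True then show ?thesis by simp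
  next
    case False
    then obtain p where p: "p \<in> S" by blast
    let ?S' = "S - {p, \<sigma> p}"
    have sp: "\<sigma> p \<in> S" "\<sigma> p \<noteq> p" using psubset.prems p by auto
    have "?S' \<subset> S" using p by auto
    moreover have "\<forall>q\<in>?S'. \<sigma> q \<in> ?S' \<and> \<sigma> (\<sigma> q) = q \<and> \<sigma> q \<noteq> q"
      using psubset.prems p by (metis Diff_iff insert_iff singletonD)
    ultimately have "even (card ?S')" using psubset.IH by blast
    moreover have "card S = card ?S' + 2"
    proof -
      have "card ?S' = card S - card {p, \<sigma> p}"
        by (rule card_Diff_subset) (use p sp psubset.hyps in auto)
      moreover have "card {p, \<sigma> p} = 2" using sp by simp
      moreover have "card S \<ge> 2"
        using card_mono[OF psubset.hyps, of "{p, \<sigma> p}"] p sp by auto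
      ultimately show ?thesis by simp
    qed
    ultimately show ?thesis by simp
  qed
qed


definition chi :: "nat \<Rightarrow> 'a::field \<Rightarrow> int" where
  "chi m y = (if abs_trace m y = 0 then 1 else -1)"

context
  fixes m :: nat
  assumes card: "card (UNIV :: 'a::{field,finite} set) = 2 ^ m" and m1: "m \<ge> 1"
begin

lemma two0: "(x::'a) + x = 0"
proof -
  have "x + x = x * (1 + 1)" by (simp add: algebra_simps)
  thus ?thesis using char2_aux[OF card m1] by simp
qed

lemma neg_same: "- (x::'a) = x"
  using two0[of x] by (simp add: add_eq_0_iff)

lemma sq_add: "((x::'a) + y) ^ 2 = x ^ 2 + y ^ 2"
proof -
  have "(x + y) ^ 2 = x^2 + y^2 + (x*y + x*y)" by (simp add: power2_eq_square algebra_simps)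
  thus ?thesis using two0[of "x*y"] by simp
qed

lemma pow2_add: "((x::'a) + y) ^ (2 ^ i) = x ^ (2 ^ i) + y ^ (2 ^ i)"
proof (induction i)
  case 0 then show ?case by simp
next
  case (Suc i)
  have "(x + y) ^ (2 ^ Suc i) = ((x + y) ^ (2 ^ i)) ^ 2" by (simp add: power_mult[symmetric] mult.commute)
  also have "\<dots> = (x ^ (2 ^ i)) ^ 2 + (y ^ (2 ^ i)) ^ 2" using Suc sq_add by simp
  also have "\<dots> = x ^ (2 ^ Suc i) + y ^ (2 ^ Suc i)" by (simp add: power_mult[symmetric] mult.commute)
  finally show ?case .
qed

lemma sum_sq: "(\<Sum>i\<in>S. (f i::'a)) ^ 2 = (\<Sum>i\<in>S. (f i) ^ 2)"
proof (induction S rule: infinite_finite_induct)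
  case (insert x F) then show ?case by (simp add: sq_add)
qed auto

lemma tr_add: "abs_trace m ((x::'a) + y) = abs_trace m x + abs_trace m y"
  unfolding abs_trace_def by (simp add: pow2_add sum.distrib)

lemma tr_0: "abs_trace m (0::'a) = 0"
  unfolding abs_trace_def by (simp add: power_0_left)

lemma tr_sq: "(abs_trace m (x::'a)) ^ 2 = abs_trace m x"
proof -
  have "(abs_trace m x) ^ 2 = (\<Sum>i<m. x ^ (2 ^ Suc i))"
    unfolding abs_trace_def sum_sq by (simp add: power_mult[symmetric] mult.commute)
  also have "\<dots> = (\<Sum>i\<in>{1..<Suc m}. x ^ (2 ^ i))"
    by (rule sum.reindex_bij_witness[of _ "\<lambda>i. i - 1" Suc]) auto
  also have "\<dots> = (\<Sum>i\<in>{1..<m}. x ^ (2 ^ i)) + x ^ (2 ^ m)"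
    using m1 by simp
  also have "x ^ (2 ^ m) = x" using power_card_same[of x] card by simp
  also have "(\<Sum>i\<in>{1..<m}. x ^ (2 ^ i)) + x = abs_trace m x"
    unfolding abs_trace_def using m1
    by (simp add: lessThan_atLeast0 sum.atLeast_Suc_lessThan add.commute)
  finally show ?thesis .
qed

lemma tr01: "abs_trace m (x::'a) = 0 \<or> abs_trace m x = 1"
proof -
  have "abs_trace m x * (abs_trace m x - 1) = 0"
    using tr_sq[of x] by (simp add: power2_eq_square algebra_simps)
  thus ?thesis by auto
qed


lemma chi_add: "chi m ((x::'a) + y) = chi m x * chi m y"
  using tr01[of x] tr01[of y] tr_add[of x y] char2_aux[OF card m1]
  unfolding chi_def by auto

lemma chi_0: "chi m (0::'a) = 1" unfolding chi_def using tr_0 by simp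

lemma chi_pm: "chi m (x::'a) = 1 \<or> chi m x = -1" unfolding chi_def by auto

lemma chi_sq: "chi m (x::'a) * chi m x = 1" unfolding chi_def by auto

lemma tr_nonzero: "\<exists>b::'a. abs_trace m b \<noteq> 0"
proof (rule ccontr)
  assume "\<not> ?thesis"
  hence all: "\<And>b::'a. abs_trace m b = 0" by auto
  define p :: "'a poly" where "p = (\<Sum>i<m. Polynomial.monom 1 (2 ^ i))"
  have ev: "poly p x = abs_trace m x" for x
    unfolding p_def abs_trace_def by (simp add: poly_sum poly_monom)
  have c: "Polynomial.coeff p n = (\<Sum>i<m. if 2 ^ i = n then 1 else 0)" for n
    unfolding p_def by (simp add: Polynomial.coeff_sum Polynomial.coeff_monom)
  have "Polynomial.coeff p 1 = 1"
  proof -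
    have "(\<Sum>i<m. if (2::nat) ^ i = 1 then (1::'a) else 0) = (\<Sum>i<m. if i = 0 then 1 else 0)"
      by (rule sum.cong) auto
    also have "\<dots> = 1" using m1 by simp
    finally show ?thesis using c by simp
  qed
  hence pnz: "p \<noteq> 0" by auto
  have "degree p \<le> 2 ^ (m - 1)"
  proof (rule degree_le, intro allI impI)
    fix i :: nat assume i: "2 ^ (m - 1) < i"
    have "\<And>j. j < m \<Longrightarrow> (2::nat) ^ j \<noteq> i"
    proof -
      fix j assume "j < m"
      hence "(2::nat) ^ j \<le> 2 ^ (m - 1)" by (intro power_increasing) auto
      thus "(2::nat) ^ j \<noteq> i" using i by linarith
    qed
    thus "Polynomial.coeff p i = 0" using c[of i] by simp
  qed
  moreover have "(2::nat) ^ (m - 1) < 2 ^ m" using m1 by (intro power_strict_increasing) auto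
  ultimately have "degree p < 2 ^ m" by linarith
  moreover have "card {x. poly p x = 0} \<le> degree p" by (rule card_poly_roots_bound[OF pnz])
  moreover have "{x. poly p x = 0} = UNIV" using ev all by auto
  ultimately show False using card by simp
qed

lemma sum_chi_zero: "(\<Sum>b\<in>UNIV. chi m (b::'a)) = 0"
proof -
  obtain b0 :: 'a where b0: "abs_trace m b0 \<noteq> 0" using tr_nonzero by blast
  have cb: "chi m b0 = -1" using b0 unfolding chi_def by simp
  have "(\<Sum>b\<in>UNIV. chi m (b::'a)) = (\<Sum>b\<in>UNIV. chi m (b + b0))"
    by (rule sum.reindex_bij_witness[of _ "\<lambda>b. b + b0" "\<lambda>b. b + b0"])
       (auto simp: two0 add.assoc)
  also have "\<dots> = - (\<Sum>b\<in>UNIV. chi m (b::'a))" by (simp add: chi_add cb sum_negf)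
  finally show ?thesis by simp
qed

lemma orth: "(\<Sum>b\<in>UNIV. chi m (b * (h::'a))) = (if h = 0 then 2 ^ m else 0)"
proof (cases "h = 0")
  case True then show ?thesis using card by (simp add: chi_0)
next
  case False
  have "(\<Sum>b\<in>UNIV. chi m (b * h)) = (\<Sum>b\<in>UNIV. chi m (b::'a))"
    by (rule sum.reindex_bij_witness[of _ "\<lambda>b. b / h" "\<lambda>b. b * h"]) (use False in auto)
  then show ?thesis using False sum_chi_zero by simp
qed

lemma pow_id:
  assumes "k mod (2 ^ m - 1) = 1 mod (2 ^ m - 1)" "k > 0"
  shows "(x::'a) ^ k = x"
proof -
  have xn: "x ^ (t * (2 ^ m - 1) + 1) = x" for t
  proof (induction t)
    case (Suc t)
    have "x ^ (Suc t * (2 ^ m - 1) + 1) = x ^ (t * (2 ^ m - 1) + 1) * x ^ (2 ^ m - 1)"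
      by (simp add: power_add[symmetric] algebra_simps)
    also have "\<dots> = x * x ^ (2 ^ m - 1)" using Suc by simp
    also have "\<dots> = x ^ (2 ^ m)"
    proof -
      have s: "Suc (2 ^ m - 1) = (2::nat) ^ m" by simp
      show ?thesis by (subst s[symmetric]) (rule power_Suc[symmetric])
    qed
    finally have "x ^ (Suc t * (2 ^ m - 1) + 1) = x ^ (2 ^ m)" .
    also have "x ^ (2 ^ m) = x" using power_card_same[of x] card by simp
    finally show ?case .
  qed simp
  have "(2::nat) ^ 1 \<le> 2 ^ m" using m1 by (intro power_increasing) auto
  hence "2 ^ m - 1 \<ge> (1::nat)" by simp
  show ?thesis
  proof (cases "2 ^ m - 1 = (1::nat)")
    case True
    have e: "k = (k - 1) * (2 ^ m - 1) + 1" using True assms(2) by simp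
    show ?thesis by (subst e) (rule xn)
  next
    case False
    hence "k mod (2^m - 1) = 1" using assms(1) \<open>2 ^ m - 1 \<ge> 1\<close> by simp
    hence e: "k = (k div (2^m-1)) * (2 ^ m - 1) + 1" by (metis div_mult_mod_eq)
    show ?thesis by (subst e) (rule xn)
  qed
qed

lemma pow_bij:
  assumes d: "d > 0" and cop: "coprime d (2 ^ m - 1)"
  shows "bij (\<lambda>x::'a. x ^ d)"
proof -
  obtain s t where st: "d * s = (2 ^ m - 1) * t + gcd d (2 ^ m - 1)"
    using bezout_nat[of d "2 ^ m - 1"] d by auto
  hence st': "d * s = (2 ^ m - 1) * t + 1" using cop by simp
  have ds: "(x::'a) ^ (d * s) = x" for x
  proof (rule pow_id)
    show "d * s mod (2 ^ m - 1) = 1 mod (2 ^ m - 1)" unfolding st' by (rule mod_mult_self4)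
    show "d * s > 0" unfolding st' by simp
  qed
  have "inj (\<lambda>x::'a. x ^ d)"
  proof (rule injI)
    fix x y :: 'a assume "x ^ d = y ^ d"
    hence "(x ^ d) ^ s = (y ^ d) ^ s" by simp
    thus "x = y" using ds[of x] ds[of y] by (simp add: power_mult)
  qed
  thus ?thesis by (simp add: finite_UNIV_inj_surj bij_def)
qed

lemma walsh_eq: "walsh_power m d a = (\<Sum>x\<in>UNIV. chi m (x ^ d + a * (x::'a)))"
  unfolding walsh_power_def chi_def by simp

end



context
  fixes m d :: nat
  assumes card: "card (UNIV :: 'a::{field,finite} set) = 2 ^ m" and m1: "m \<ge> 1"
    and d: "d > 0" and cop: "coprime d (2 ^ m - 1)"
begin

lemmas two0' = two0[OF card m1]
lemmas neg_same' = neg_same[OF card m1]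
lemmas chi_add' = chi_add[OF card m1]
lemmas chi_0' = chi_0[OF card m1]
lemmas chi_sq' = chi_sq[OF card m1]
lemmas orth' = orth[OF card m1]
lemmas sum_chi_zero' = sum_chi_zero[OF card m1]
lemmas pow_bij' = pow_bij[OF card m1 d cop]
lemmas walsh_eq' = walsh_eq[OF card m1]

lemma add_eq0_iff': "(x::'a) + y = 0 \<longleftrightarrow> y = x"
  using two0'[of x] by (metis add_right_cancel add.commute)

lemma chi_mult_add: "chi m (a * x) * chi m (a * y) = chi m (a * ((x::'a) + y))"
  by (simp add: chi_add' distrib_left)

lemma S1: "(\<Sum>a\<in>UNIV. walsh_power m d (a::'a)) = 2 ^ m"
proof -
  have "(\<Sum>a\<in>UNIV. walsh_power m d (a::'a)) = (\<Sum>a\<in>UNIV. \<Sum>x\<in>UNIV. chi m (x ^ d) * chi m (a * (x::'a)))"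
    by (simp add: walsh_eq' chi_add')
  also have "\<dots> = (\<Sum>x\<in>UNIV. chi m (x ^ d) * (\<Sum>a\<in>UNIV. chi m (a * (x::'a))))"
    by (subst sum.swap) (simp add: sum_distrib_left)
  also have "\<dots> = (\<Sum>x\<in>UNIV. if x = (0::'a) then (2::int) ^ m else 0)"
    by (rule sum.cong) (use d in \<open>auto simp: orth' chi_0' power_0_left\<close>)
  also have "\<dots> = 2 ^ m" by simp
  finally show ?thesis .
qed

lemma W0: "walsh_power m d (0::'a) = 0"
proof -
  have "walsh_power m d (0::'a) = (\<Sum>x\<in>UNIV. chi m ((x::'a) ^ d))" by (simp add: walsh_eq')
  also have "\<dots> = (\<Sum>y\<in>UNIV. chi m (y::'a))"
    by (rule sum.reindex_bij_betw) (use pow_bij' in simp)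
  also have "\<dots> = 0" by (rule sum_chi_zero')
  finally show ?thesis .
qed

lemma S2: "(\<Sum>a\<in>UNIV. (walsh_power m d (a::'a)) ^ 2) = 2 ^ (2 * m)"
proof -
  have sq: "(walsh_power m d (a::'a)) ^ 2 =
      (\<Sum>x\<in>UNIV. \<Sum>y\<in>UNIV. chi m (x ^ d) * chi m (y ^ d) * chi m (a * (x + y)))" for a
    by (simp add: walsh_eq' power2_eq_square sum_product chi_add' distrib_left mult_ac)
  have "(\<Sum>a\<in>UNIV. (walsh_power m d (a::'a)) ^ 2) =
     (\<Sum>x\<in>UNIV. \<Sum>y\<in>UNIV. chi m (x ^ d) * chi m (y ^ d) * (\<Sum>a\<in>UNIV. chi m (a * ((x::'a) + y))))"
  proof -
    have "(\<Sum>a\<in>UNIV. \<Sum>x\<in>UNIV. \<Sum>y\<in>UNIV. chi m (x ^ d) * chi m (y ^ d) * chi m (a * ((x::'a) + y)))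
        = (\<Sum>x\<in>UNIV. \<Sum>a\<in>UNIV. \<Sum>y\<in>UNIV. chi m (x ^ d) * chi m (y ^ d) * chi m (a * ((x::'a) + y)))"
      by (rule sum.swap)
    also have "\<dots> = (\<Sum>x\<in>UNIV. \<Sum>y\<in>UNIV. \<Sum>a\<in>UNIV. chi m (x ^ d) * chi m (y ^ d) * chi m (a * ((x::'a) + y)))"
      by (rule sum.cong[OF refl], rule sum.swap)
    also have "\<dots> = (\<Sum>x\<in>UNIV. \<Sum>y\<in>UNIV. chi m (x ^ d) * chi m (y ^ d) * (\<Sum>a\<in>UNIV. chi m (a * ((x::'a) + y))))"
      by (simp only: sum_distrib_left)
    finally have "(\<Sum>a\<in>UNIV. \<Sum>x\<in>UNIV. \<Sum>y\<in>UNIV. chi m (x ^ d) * chi m (y ^ d) * chi m (a * ((x::'a) + y)))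
      = (\<Sum>x\<in>UNIV. \<Sum>y\<in>UNIV. chi m (x ^ d) * chi m (y ^ d) * (\<Sum>a\<in>UNIV. chi m (a * ((x::'a) + y))))" .
    then show ?thesis by (simp only: sq)
  qed
  also have "\<dots> = (\<Sum>x\<in>UNIV. \<Sum>y\<in>UNIV. if y = (x::'a) then (2::int) ^ m else 0)"
    by (intro sum.cong refl) (auto simp: orth' add_eq0_iff' chi_sq')
  also have "\<dots> = (\<Sum>x\<in>(UNIV::'a set). (2::int) ^ m)" by simp
  also have "\<dots> = 2 ^ (2 * m)" using card by (simp add: power_add[symmetric] mult_2)
  finally show ?thesis .
qed

lemma Wabs: "\<bar>walsh_power m d (a::'a)\<bar> \<le> 2 ^ m"
proof -
  have "\<bar>walsh_power m d a\<bar> \<le> (\<Sum>x\<in>(UNIV::'a set). \<bar>if abs_trace m (x ^ d + a * x) = 0 then 1 else (-1::int)\<bar>)"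
    unfolding walsh_power_def by (rule sum_abs)
  also have "\<dots> = (\<Sum>x\<in>(UNIV::'a set). 1)" by (intro sum.cong) auto
  also have "\<dots> = 2 ^ m" using card by simp
  finally show ?thesis .
qed


lemma chi3: "chi m (u::'a) * chi m v * chi m w = chi m (u + v + w)"
  by (simp add: chi_add')

lemma swap3: "(\<Sum>b\<in>A. \<Sum>a\<in>B. \<Sum>x\<in>C. (f b a x :: int)) = (\<Sum>x\<in>C. \<Sum>b\<in>A. \<Sum>a\<in>B. f b a x)"
proof -
  have "(\<Sum>b\<in>A. \<Sum>a\<in>B. \<Sum>x\<in>C. f b a x) = (\<Sum>b\<in>A. \<Sum>x\<in>C. \<Sum>a\<in>B. f b a x)"
    by (rule sum.cong[OF refl], rule sum.swap)
  also have "\<dots> = (\<Sum>x\<in>C. \<Sum>b\<in>A. \<Sum>a\<in>B. f b a x)" by (rule sum.swap)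
  finally show ?thesis .
qed

lemma cube_sum: "(\<Sum>x\<in>(UNIV::'a set). (f x :: int)) ^ 3 =
   (\<Sum>x\<in>UNIV. \<Sum>y\<in>UNIV. \<Sum>z\<in>UNIV. f x * f y * f z)"
  by (simp add: power3_eq_cube sum_distrib_left sum_distrib_right mult_ac)

lemma Wb_scale:
  assumes b: "b \<noteq> 0"
  shows "(\<Sum>a\<in>UNIV. (\<Sum>x\<in>UNIV. chi m (b * x ^ d + a * (x::'a))) ^ 3) =
         (\<Sum>a\<in>UNIV. (walsh_power m d (a::'a)) ^ 3)"
proof -
  obtain c :: 'a where c: "c ^ d = b" using pow_bij' unfolding bij_def surj_def by metis
  have c0: "c \<noteq> 0" using c b d by auto
  have inner: "(\<Sum>x\<in>UNIV. chi m (b * x ^ d + a * (x::'a))) = walsh_power m d (a / c)" for a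
  proof -
    have "(\<Sum>x\<in>UNIV. chi m (b * x ^ d + a * (x::'a))) = (\<Sum>x\<in>UNIV. chi m ((c * x) ^ d + (a / c) * (c * x)))"
      using c c0 by (simp add: power_mult_distrib)
    also have "\<dots> = (\<Sum>y\<in>UNIV. chi m (y ^ d + (a / c) * y))"
      by (rule sum.reindex_bij_witness[of _ "\<lambda>y. y / c" "\<lambda>x. c * x"]) (use c0 in auto)
    also have "\<dots> = walsh_power m d (a / c)" by (simp add: walsh_eq')
    finally show ?thesis .
  qed
  have "(\<Sum>a\<in>UNIV. (walsh_power m d (a / c)) ^ 3) = (\<Sum>a\<in>UNIV. (walsh_power m d (a::'a)) ^ 3)"
    by (rule sum.reindex_bij_witness[of _ "\<lambda>a. a * c" "\<lambda>a. a / c"]) (use c0 in auto)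
  thus ?thesis using inner by simp
qed

lemma Wb_zero: "(\<Sum>a\<in>UNIV. (\<Sum>x\<in>UNIV. chi m (0 * x ^ d + a * (x::'a))) ^ 3) = 2 ^ (3 * m)"
proof -
  have "(\<Sum>a\<in>UNIV. (\<Sum>x\<in>UNIV. chi m (0 * x ^ d + a * (x::'a))) ^ 3) =
        (\<Sum>a\<in>UNIV. if a = (0::'a) then (2::int) ^ (3 * m) else 0)"
  proof (rule sum.cong[OF refl])
    fix a :: 'a
    have "(\<Sum>x\<in>UNIV. chi m (0 * x ^ d + a * (x::'a))) = (\<Sum>x\<in>UNIV. chi m (x * a))"
      by (simp add: mult.commute)
    also have "\<dots> = (if a = 0 then 2 ^ m else 0)" by (rule orth')
    finally show "(\<Sum>x\<in>UNIV. chi m (0 * x ^ d + a * (x::'a))) ^ 3 = (if a = (0::'a) then (2::int) ^ (3 * m) else 0)"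
      by (simp add: power_mult[symmetric] mult.commute)
  qed
  also have "\<dots> = 2 ^ (3 * m)" by simp
  finally show ?thesis .
qed

definition Tset :: "nat \<Rightarrow> ('a \<times> 'a) set" where
  "Tset e = {p. fst p ^ e + snd p ^ e + (fst p + snd p) ^ e = 0}"

lemma total:
  "(\<Sum>b\<in>UNIV. \<Sum>a\<in>UNIV. (\<Sum>x\<in>UNIV. chi m (b * x ^ d + a * (x::'a))) ^ 3) =
     2 ^ (2 * m) * int (card (Tset d :: ('a \<times> 'a) set))"
proof -
  define H where "H = (\<lambda>x y z::'a. x ^ d + y ^ d + z ^ d)"
  have step1: "(\<Sum>x\<in>UNIV. chi m (b * x ^ d + a * (x::'a))) ^ 3 =
     (\<Sum>x\<in>UNIV. \<Sum>y\<in>UNIV. \<Sum>z\<in>UNIV. chi m (b * H x y z) * chi m (a * (x + y + z)))" for a b :: 'a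
    unfolding cube_sum chi3
    by (intro sum.cong refl) (simp add: chi_add'[symmetric] H_def algebra_simps)
  have "(\<Sum>b\<in>UNIV. \<Sum>a\<in>UNIV. (\<Sum>x\<in>UNIV. chi m (b * x ^ d + a * (x::'a))) ^ 3) =
     (\<Sum>b\<in>UNIV. \<Sum>a\<in>UNIV. \<Sum>x\<in>UNIV. \<Sum>y\<in>UNIV. \<Sum>z\<in>UNIV. chi m (b * H x y z) * chi m (a * (x + y + z)))"
    by (simp add: step1)
  also have "\<dots> = (\<Sum>x\<in>UNIV. \<Sum>b\<in>UNIV. \<Sum>a\<in>UNIV. \<Sum>y\<in>UNIV. \<Sum>z\<in>UNIV. chi m (b * H x y z) * chi m (a * (x + y + z)))"
    by (rule swap3)
  also have "\<dots> = (\<Sum>x\<in>UNIV. \<Sum>y\<in>UNIV. \<Sum>b\<in>UNIV. \<Sum>a\<in>UNIV. \<Sum>z\<in>UNIV. chi m (b * H x y z) * chi m (a * (x + y + z)))"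
    by (rule sum.cong[OF refl], rule swap3)
  also have "\<dots> = (\<Sum>x\<in>UNIV. \<Sum>y\<in>UNIV. \<Sum>z\<in>UNIV. \<Sum>b\<in>UNIV. \<Sum>a\<in>UNIV. chi m (b * H x y z) * chi m (a * (x + y + z)))"
    by (rule sum.cong[OF refl], rule sum.cong[OF refl], rule swap3)
  also have "\<dots> = (\<Sum>x\<in>UNIV. \<Sum>y\<in>UNIV. \<Sum>z\<in>UNIV. (if H x y z = 0 then 2 ^ m else 0) * (if x + y + z = 0 then 2 ^ m else 0))"
    by (intro sum.cong refl) (simp add: sum_product[symmetric] orth')
  also have "\<dots> = (\<Sum>x\<in>UNIV. \<Sum>y\<in>(UNIV::'a set). if H x y (x + y) = 0 then (2::int) ^ (2 * m) else 0)"
  proof (intro sum.cong refl)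
    fix x y :: 'a
    have "(\<Sum>z\<in>UNIV. (if H x y z = 0 then (2::int) ^ m else 0) * (if x + y + z = 0 then 2 ^ m else 0)) =
          (\<Sum>z\<in>UNIV. if z = x + y then (if H x y (x + y) = 0 then 2 ^ (2 * m) else 0) else 0)"
      by (intro sum.cong refl) (auto simp: add_eq0_iff' power_add[symmetric] mult_2)
    also have "\<dots> = (if H x y (x + y) = 0 then 2 ^ (2 * m) else 0)" by simp
    finally show "(\<Sum>z\<in>UNIV. (if H x y z = 0 then (2::int) ^ m else 0) * (if x + y + z = 0 then 2 ^ m else 0)) =
          (if H x y (x + y) = 0 then 2 ^ (2 * m) else 0)" .
  qed
  also have "\<dots> = (\<Sum>p\<in>(UNIV::('a\<times>'a) set). if H (fst p) (snd p) (fst p + snd p) = 0 then (2::int) ^ (2 * m) else 0)"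
    by (simp add: sum.cartesian_product split_def)
  also have "\<dots> = (\<Sum>p\<in>Tset d. (2::int) ^ (2 * m))"
    by (simp add: sum.inter_filter[symmetric] Tset_def H_def)
  also have "\<dots> = 2 ^ (2 * m) * int (card (Tset d :: ('a \<times> 'a) set))" by simp
  finally show ?thesis .
qed

lemma T_even: "even (card (Tset d :: ('a \<times> 'a) set))"
proof -
  let ?S = "Tset d :: ('a \<times> 'a) set"
  let ?D = "(\<lambda>x::'a. (x, x)) ` UNIV"
  have DS: "?D \<subseteq> ?S" using d by (auto simp: Tset_def two0')
  have cD: "card ?D = 2 ^ m" using card by (simp add: card_image inj_on_def)
  have "even (card (?S - ?D))"
  proof (rule inv_even[where \<sigma> = "\<lambda>p. (snd p, fst p)"])
    show "finite (?S - ?D)" by simp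
    show "\<forall>p\<in>?S - ?D. (snd p, fst p) \<in> ?S - ?D \<and> (snd (snd p, fst p), fst (snd p, fst p)) = p \<and> (snd p, fst p) \<noteq> p"
      by (auto simp: Tset_def add.commute add.left_commute)
  qed
  moreover have "card ?S = card (?S - ?D) + card ?D"
    using card_Diff_subset[OF _ DS] card_mono[OF _ DS] by simp
  moreover have "even ((2::nat) ^ m)" using m1 by simp
  ultimately show ?thesis using cD by simp
qed

lemma S3_dvd: "2 ^ (2 * m + 1) dvd (\<Sum>a\<in>UNIV. (walsh_power m d (a::'a)) ^ 3)"
proof -
  define S3 where "S3 = (\<Sum>a\<in>UNIV. (walsh_power m d (a::'a)) ^ 3)"
  define V where "V = (\<lambda>b. \<Sum>a\<in>UNIV. (\<Sum>x\<in>UNIV. chi m (b * x ^ d + a * (x::'a))) ^ 3)"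
  have "(\<Sum>b\<in>UNIV. V b) = V 0 + (\<Sum>b\<in>UNIV - {0}. V b)"
    by (rule sum.remove) auto
  also have "(\<Sum>b\<in>UNIV - {0}. V b) = (\<Sum>b\<in>(UNIV::'a set) - {0}. S3)"
    by (rule sum.cong) (auto simp: V_def S3_def Wb_scale)
  also have "\<dots> = (2 ^ m - 1) * S3"
  proof -
    have "card ((UNIV::'a set) - {0}) = 2 ^ m - 1" using card by (simp add: card_Diff_singleton)
    moreover have "(1::nat) \<le> 2 ^ m" by simp
    ultimately show ?thesis by (simp add: of_nat_diff)
  qed
  finally have eq: "2 ^ (3 * m) + (2 ^ m - 1) * S3 = 2 ^ (2 * m) * int (card (Tset d :: ('a \<times> 'a) set))"
    using total Wb_zero unfolding V_def by simp
  obtain t where t: "card (Tset d :: ('a \<times> 'a) set) = 2 * t" using T_even by blast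
  define M :: int where "M = 2 ^ m"
  have M2: "2 ^ (2 * m) = M * M" "2 ^ (3 * m) = M * M * M" unfolding M_def
    by (simp_all add: power_add[symmetric] numeral_3_eq_3 mult_2 algebra_simps)
  obtain k where k: "M = 2 * k"
  proof -
    have "M = 2 * 2 ^ (m - 1)" unfolding M_def using m1 by (cases m) auto
    thus ?thesis using that by blast
  qed
  have "(M - 1) * S3 = M * M * (2 * int t - M)" using eq t M2 unfolding M_def by (simp add: algebra_simps)
  hence "(M - 1) * S3 = 2 * M * M * (int t - k)" using k by (simp add: algebra_simps)
  hence dv: "2 * M * M dvd (M - 1) * S3" by simp
  have e2: "(2::int) ^ (2 * m + 1) = 2 * M * M"
  proof -
    have nn: "2 * m + 1 = Suc (m + m)" by simp
    have "(2::int) ^ (2 * m + 1) = 2 * (2 ^ m * 2 ^ m)" unfolding nn power_Suc power_add ..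
    thus ?thesis unfolding M_def by (simp add: mult.assoc)
  qed
  have "odd (M - 1)" using k by simp
  hence "coprime ((2::int) ^ (2 * m + 1)) (M - 1)" by simp
  hence cp: "coprime (2 * M * M) (M - 1)" by (simp only: e2)
  have "2 * M * M dvd S3" using dv cp coprime_dvd_mult_right_iff by blast
  thus ?thesis by (simp only: e2 S3_def[symmetric])
qed

end



lemma two_adic: "(X::int) \<noteq> 0 \<Longrightarrow> \<exists>p x. X = 2 ^ p * x \<and> odd x"
proof (induction "nat \<bar>X\<bar>" arbitrary: X rule: less_induct)
  case less
  show ?case
  proof (cases "even X")
    case True
    then obtain X' where X': "X = 2 * X'" by blast
    hence "X' \<noteq> 0" "nat \<bar>X'\<bar> < nat \<bar>X\<bar>" using less.prems by auto
    then obtain p x where "X' = 2 ^ p * x" "odd x" using less.hyps by blast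
    hence "X = 2 ^ Suc p * x \<and> odd x" using X' by simp
    then show ?thesis by blast
  next
    case False
    hence "X = 2 ^ 0 * X \<and> odd X" by simp
    then show ?thesis by blast
  qed
qed

lemma pow_lt: "(X::int) = 2 ^ p * x \<Longrightarrow> odd x \<Longrightarrow> \<bar>X\<bar> < 2 ^ m \<Longrightarrow> p < m"
proof -
  assume X: "X = 2 ^ p * x" and x: "odd x" and lt: "\<bar>X\<bar> < 2 ^ m"
  have "\<bar>x\<bar> \<ge> 1" using x by (cases "x = 0") auto
  hence "(2::int) ^ p \<le> \<bar>X\<bar>" unfolding X abs_mult by (simp add: mult_le_cancel_left1)
  hence "(2::int) ^ p < 2 ^ m" using lt by linarith
  thus "p < m" by simp
qed

lemma dvd_odd_pow: "(2::int) ^ n dvd 2 ^ e * w \<Longrightarrow> odd w \<Longrightarrow> n \<le> e"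
proof (rule ccontr)
  assume a: "2 ^ n dvd 2 ^ e * w" "odd w" "\<not> n \<le> e"
  hence "(2::int) ^ (e + 1) dvd 2 ^ n" by (intro le_imp_power_dvd) simp
  hence "(2::int) ^ (e + 1) dvd 2 ^ e * w" using a(1) dvd_trans by blast
  hence "2 * 2 ^ e dvd 2 ^ e * w" by simp
  hence "2 dvd w" by (simp add: mult.commute)
  thus False using a(2) by simp
qed

lemma nt:
  fixes x y z :: int and p q r m :: nat
  assumes xo: "odd x" and yo: "odd y" and zo: "odd z" and pm: "p < m" and qm: "q < m" and rm: "r < m"
    and dv: "(2::int) ^ (2 * m + 1) dvd
       (2^p*x) * (2^q*y) * (2^r*z) * (2^m - 1)
       - 2^m * ((2^p*x) * (2^q*y) + (2^q*y) * (2^r*z) + (2^r*z) * (2^p*x))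
       + 2^(2*m) * (2^p*x + 2^q*y + 2^r*z)"
  shows "m + 2 \<le> p + q"
proof -
  define e where "e = p + q + r"
  define R where "R = (- (2^m * ((2^p*x) * (2^q*y) + (2^q*y) * (2^r*z) + (2^r*z) * (2^p*x)))
       + 2^(2*m) * (2^p*x + 2^q*y + 2^r*z) :: int)"
  have pw: "(2::int) ^ (e + 1) dvd 2 ^ k" if "e + 1 \<le> k" for k
    using that by (rule le_imp_power_dvd)
  have d1: "(2::int) ^ (e + 1) dvd 2 ^ (m + (p + q))" by (rule pw) (use rm in \<open>simp add: e_def\<close>)
  have d2: "(2::int) ^ (e + 1) dvd 2 ^ (m + (q + r))" by (rule pw) (use pm in \<open>simp add: e_def\<close>)
  have d3: "(2::int) ^ (e + 1) dvd 2 ^ (m + (r + p))" by (rule pw) (use qm in \<open>simp add: e_def\<close>)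
  have d4: "(2::int) ^ (e + 1) dvd 2 ^ (2 * m + p)" by (rule pw) (use qm rm in \<open>simp add: e_def\<close>)
  have d5: "(2::int) ^ (e + 1) dvd 2 ^ (2 * m + q)" by (rule pw) (use pm rm in \<open>simp add: e_def\<close>)
  have d6: "(2::int) ^ (e + 1) dvd 2 ^ (2 * m + r)" by (rule pw) (use pm qm in \<open>simp add: e_def\<close>)
  have Req: "R = - (2 ^ (m + (p + q)) * (x * y) + 2 ^ (m + (q + r)) * (y * z) + 2 ^ (m + (r + p)) * (z * x))
       + (2 ^ (2 * m + p) * x + 2 ^ (2 * m + q) * y + 2 ^ (2 * m + r) * z)"
    unfolding R_def by (simp add: power_add algebra_simps)
  have dR: "(2::int) ^ (e + 1) dvd R" unfolding Req
    using d1 d2 d3 d4 d5 d6 by (intro dvd_add dvd_minus_iff[THEN iffD2] dvd_mult2) auto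
  then obtain K where K: "R = 2 ^ (e + 1) * K" by blast
  have main: "(2^p*x) * (2^q*y) * (2^r*z) * (2^m - 1) = (2::int) ^ e * (x * y * z * (2 ^ m - 1))"
    unfolding e_def by (simp add: power_add algebra_simps)
  have "(2^p*x) * (2^q*y) * (2^r*z) * (2^m - 1)
       - 2^m * ((2^p*x) * (2^q*y) + (2^q*y) * (2^r*z) + (2^r*z) * (2^p*x))
       + 2^(2*m) * (2^p*x + 2^q*y + 2^r*z) = (2^p*x) * (2^q*y) * (2^r*z) * (2^m - 1) + R"
    unfolding R_def by simp
  also have "\<dots> = 2 ^ e * (x * y * z * (2 ^ m - 1)) + 2 ^ (e + 1) * K" using main K by simp
  also have "\<dots> = 2 ^ e * (x * y * z * (2 ^ m - 1) + 2 * K)" by (simp add: algebra_simps)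
  finally have "(2::int) ^ (2 * m + 1) dvd 2 ^ e * (x * y * z * (2 ^ m - 1) + 2 * K)"
    using dv by simp
  moreover have "odd (x * y * z * (2 ^ m - 1) + 2 * K)" using xo yo zo pm by simp
  ultimately have "2 * m + 1 \<le> e" by (rule dvd_odd_pow)
  thus ?thesis unfolding e_def using rm by linarith
qed




theorem lemma9:
  fixes m d :: nat and A B C :: int
  assumes card: "card (UNIV :: 'a::{field,finite} set) = 2 ^ m"
    and m: "m \<ge> 1"
    and d: "d > 0"
    and cop: "coprime d (2 ^ m - 1)"
    and three: "(walsh_power m d :: 'a \<Rightarrow> int) ` (UNIV - {0}) = {A, B, C}"
    and dist: "A \<noteq> B" "A \<noteq> C" "B \<noteq> C"
    and nz: "A \<noteq> 0" "B \<noteq> 0" "C \<noteq> 0"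
  shows "2 ^ (m + 1) dvd A * B"
proof -
  define W where "W = (walsh_power m d :: 'a \<Rightarrow> int)"
  define U where "U = (UNIV - {0::'a})"
  have S1: "(\<Sum>a\<in>UNIV. W a) = 2 ^ m" unfolding W_def by (rule S1[OF card m d cop])
  have S2: "(\<Sum>a\<in>UNIV. (W a) ^ 2) = 2 ^ (2 * m)" unfolding W_def by (rule S2[OF card m d cop])
  have W0: "W 0 = 0" unfolding W_def by (rule W0[OF card m d cop])
  have S3: "2 ^ (2 * m + 1) dvd (\<Sum>a\<in>UNIV. (W a) ^ 3)" unfolding W_def by (rule S3_dvd[OF card m d cop])
  have vals: "\<And>a. a \<in> U \<Longrightarrow> W a \<in> {A, B, C}" using three unfolding W_def U_def by blast
  have att: "\<And>v. v \<in> {A, B, C} \<Longrightarrow> \<exists>a\<in>U. W a = v" using three unfolding W_def U_def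
    by (metis imageE)
  have cardU: "card U = 2 ^ m - 1" unfolding U_def using card by (simp add: card_Diff_singleton)
  have sumU: "(\<Sum>a\<in>U. (W a) ^ k) = (\<Sum>a\<in>UNIV. (W a) ^ k)" if "k \<ge> 1" for k
  proof -
    have "(\<Sum>a\<in>UNIV. (W a) ^ k) = (W 0) ^ k + (\<Sum>a\<in>U. (W a) ^ k)"
      unfolding U_def by (rule sum.remove) auto
    thus ?thesis using W0 that by simp
  qed
  have small: "\<bar>W a\<bar> < 2 ^ m" if a: "a \<in> U" for a
  proof -
    have "\<exists>v\<in>{A, B, C}. v \<noteq> W a" using dist by auto
    then obtain b where b: "b \<in> U" "W b \<noteq> W a" using att by blast
    hence ab: "a \<noteq> b" by auto
    have Wb0: "W b \<noteq> 0" using vals[OF b(1)] nz by auto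
    have "(W a) ^ 2 + (W b) ^ 2 = (\<Sum>c\<in>{a, b}. (W c) ^ 2)" using ab by simp
    also have "\<dots> \<le> (\<Sum>c\<in>UNIV. (W c) ^ 2)" by (rule sum_mono2) auto
    finally have "(W a) ^ 2 + (W b) ^ 2 \<le> 2 ^ (2 * m)" using S2 by simp
    moreover have "(W b) ^ 2 > 0" using Wb0 by simp
    ultimately have "(W a) ^ 2 < 2 ^ (2 * m)" by linarith
    hence "(W a) ^ 2 < (2 ^ m) ^ 2" by (simp add: power_mult[symmetric] mult.commute)
    thus ?thesis using power2_less_imp_less[of "\<bar>W a\<bar>" "2 ^ m"] by simp
  qed
  have absv: "\<bar>v\<bar> < 2 ^ m" if "v \<in> {A, B, C}" for v
    using att[OF that] small by blast
  have cub: "(W a) ^ 3 = (A + B + C) * (W a) ^ 2 - (A * B + B * C + C * A) * W a + A * B * C"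
    if "a \<in> U" for a
  proof -
    have "(W a - A) * (W a - B) * (W a - C) = 0" using vals[OF that] by auto
    thus ?thesis by (simp add: algebra_simps power2_eq_square power3_eq_cube)
  qed
  have "(\<Sum>a\<in>U. (W a) ^ 3) = (A + B + C) * (\<Sum>a\<in>U. (W a) ^ 2) - (A * B + B * C + C * A) * (\<Sum>a\<in>U. W a)
      + A * B * C * int (card U)"
    by (simp add: cub sum.distrib sum_subtractf sum_distrib_left)
  hence "(\<Sum>a\<in>UNIV. (W a) ^ 3) = (A + B + C) * 2 ^ (2 * m) - (A * B + B * C + C * A) * 2 ^ m
      + A * B * C * (2 ^ m - 1)"
    using sumU[of 3] sumU[of 2] sumU[of 1] S1 S2 cardU by (simp add: of_nat_diff)
  with S3 have cong: "(2::int) ^ (2 * m + 1) dvd A * B * C * (2 ^ m - 1)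
       - 2 ^ m * (A * B + B * C + C * A) + 2 ^ (2 * m) * (A + B + C)"
    by (simp add: algebra_simps)
  obtain p x where A': "A = 2 ^ p * x" "odd x" using two_adic[OF nz(1)] by blast
  obtain q y where B': "B = 2 ^ q * y" "odd y" using two_adic[OF nz(2)] by blast
  obtain r z where C': "C = 2 ^ r * z" "odd z" using two_adic[OF nz(3)] by blast
  have pm: "p < m" using pow_lt[OF A'] absv by auto
  have qm: "q < m" using pow_lt[OF B'] absv by auto
  have rm: "r < m" using pow_lt[OF C'] absv by auto
  have "m + 2 \<le> p + q"
    by (rule nt[OF A'(2) B'(2) C'(2) pm qm rm]) (use cong A'(1) B'(1) C'(1) in simp)
  hence "(2::int) ^ (m + 1) dvd 2 ^ (p + q)" by (intro le_imp_power_dvd) simp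
  moreover have "A * B = 2 ^ (p + q) * (x * y)" using A' B' by (simp add: power_add algebra_simps)
  ultimately show ?thesis by simp
qed


end
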